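(* Let $P$ be a Markovian kernel on $(E,\mathcal{B})$, $S_n=\frac1n\sum_{k=0}^{n-1}P^k$, and $m$ a nonzero finite positive measure. Assume the generalized drift condition: there exist measurable $V,b:E\to[0,\infty)$ and $C\in\mathcal{B}$ with $PV\le V-1+b1_C$ on $E$; and Condition D: for every $r>0$ there exists $N_0>0$ with $\sup_{n\ge N_0}m(1_{[V\le r]}S_n(b^2))<\infty$. Then there exists $n_0>0$ with $\inf_{n\ge n_0}m(S_n1_C)>0$. *)

theory Defs
  imports "HOL-Probability.Probability"
begin

text \<open>A Markovian kernel on (E, B) = space M, sets M is a measurable map
  K : M \<rightarrow> prob_algebra M.  Its action on nonnegative functions:\<close>

definition kernel_op :: "('a \<Rightarrow> 'a measure) \<Rightarrow> ('a \<Rightarrow> ennreal) \<Rightarrow> 'a \<Rightarrow> ennreal" where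
  "kernel_op K f = (\<lambda>x. \<integral>\<^sup>+ y. f y \<partial>(K x))"

definition kernel_pow :: "('a \<Rightarrow> 'a measure) \<Rightarrow> nat \<Rightarrow> ('a \<Rightarrow> ennreal) \<Rightarrow> 'a \<Rightarrow> ennreal" where
  "kernel_pow K k f = (kernel_op K ^^ k) f"

definition cesaro_avg :: "('a \<Rightarrow> 'a measure) \<Rightarrow> nat \<Rightarrow> ('a \<Rightarrow> ennreal) \<Rightarrow> 'a \<Rightarrow> ennreal" where
  "cesaro_avg K n f = (\<lambda>x. (\<Sum>k<n. kernel_pow K k f x) / ennreal (real n))"

end

theory Submission
  imports Defs
begin

lemma kK:
  assumes K: "K \<in> M \<rightarrow>\<^sub>M prob_algebra M" and x: "x \<in> space M"
  shows "prob_space (K x)" "sets (K x) = sets M" "space (K x) = space M"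
proof -
  have "K x \<in> space (prob_algebra M)" using measurable_space[OF K x] .
  then show "prob_space (K x)" "sets (K x) = sets M" by (auto simp: space_prob_algebra)
  then show "space (K x) = space M" using sets_eq_imp_space_eq by blast
qed

lemma kop_meas:
  assumes K: "K \<in> M \<rightarrow>\<^sub>M prob_algebra M" and f: "f \<in> borel_measurable M"
  shows "kernel_op K f \<in> borel_measurable M"
  unfolding kernel_op_def
  using measurable_comp[OF measurable_prob_algebraD[OF K] nn_integral_measurable_subprob_algebra[OF f]]
  by (simp add: comp_def)

lemma kpow_Suc: "kernel_pow K (Suc k) f = kernel_op K (kernel_pow K k f)"
  by (simp add: kernel_pow_def)

lemma kpow_0: "kernel_pow K 0 f = f"
  by (simp add: kernel_pow_def)

lemma kpow_meas:
  assumes K: "K \<in> M \<rightarrow>\<^sub>M prob_algebra M" and f: "f \<in> borel_measurable M"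
  shows "kernel_pow K k f \<in> borel_measurable M"
  by (induction k) (auto simp: kpow_0 kpow_Suc f intro: kop_meas[OF K])

lemma kpow_mono:
  assumes K: "K \<in> M \<rightarrow>\<^sub>M prob_algebra M" and fg: "\<And>y. y \<in> space M \<Longrightarrow> f y \<le> g y"
  shows "x \<in> space M \<Longrightarrow> kernel_pow K k f x \<le> kernel_pow K k g x"
proof (induction k arbitrary: x)
  case 0 then show ?case by (simp add: kpow_0 fg)
next
  case (Suc k)
  show ?case unfolding kpow_Suc kernel_op_def
    by (rule nn_integral_mono) (use Suc kK(3)[OF K Suc.prems] in auto)
qed

lemma kpow_add:
  assumes K: "K \<in> M \<rightarrow>\<^sub>M prob_algebra M" and f: "f \<in> borel_measurable M" and g: "g \<in> borel_measurable M"
  shows "x \<in> space M \<Longrightarrow> kernel_pow K k (\<lambda>y. f y + g y) x = kernel_pow K k f x + kernel_pow K k g x"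
proof (induction k arbitrary: x)
  case 0 then show ?case by (simp add: kpow_0)
next
  case (Suc k)
  have s: "space (K x) = space M" "sets (K x) = sets M" using kK[OF K Suc.prems] by auto
  have mf: "kernel_pow K k f \<in> borel_measurable (K x)" "kernel_pow K k g \<in> borel_measurable (K x)"
    using kpow_meas[OF K f] kpow_meas[OF K g] measurable_cong_sets[OF s(2) refl] by auto
  have "kernel_pow K (Suc k) (\<lambda>y. f y + g y) x = (\<integral>\<^sup>+ y. kernel_pow K k f y + kernel_pow K k g y \<partial>K x)"
    unfolding kpow_Suc kernel_op_def by (rule nn_integral_cong) (use Suc s in auto)
  also have "\<dots> = kernel_pow K (Suc k) f x + kernel_pow K (Suc k) g x"
    unfolding kpow_Suc kernel_op_def by (rule nn_integral_add[OF mf])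
  finally show ?case .
qed

lemma kpow_cmult:
  assumes K: "K \<in> M \<rightarrow>\<^sub>M prob_algebra M" and f: "f \<in> borel_measurable M"
  shows "x \<in> space M \<Longrightarrow> kernel_pow K k (\<lambda>y. c * f y) x = c * kernel_pow K k f x"
proof (induction k arbitrary: x)
  case 0 then show ?case by (simp add: kpow_0)
next
  case (Suc k)
  have s: "space (K x) = space M" "sets (K x) = sets M" using kK[OF K Suc.prems] by auto
  have mf: "kernel_pow K k f \<in> borel_measurable (K x)"
    using kpow_meas[OF K f] measurable_cong_sets[OF s(2) refl] by auto
  have "kernel_pow K (Suc k) (\<lambda>y. c * f y) x = (\<integral>\<^sup>+ y. c * kernel_pow K k f y \<partial>K x)"
    unfolding kpow_Suc kernel_op_def by (rule nn_integral_cong) (use Suc s in auto)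
  also have "\<dots> = c * kernel_pow K (Suc k) f x"
    unfolding kpow_Suc kernel_op_def by (rule nn_integral_cmult[OF mf])
  finally show ?case .
qed

lemma kpow_const:
  assumes K: "K \<in> M \<rightarrow>\<^sub>M prob_algebra M"
  shows "x \<in> space M \<Longrightarrow> kernel_pow K k (\<lambda>y. c) x = c"
proof (induction k arbitrary: x)
  case 0 then show ?case by (simp add: kpow_0)
next
  case (Suc k)
  have s: "space (K x) = space M" "prob_space (K x)" using kK[OF K Suc.prems] by auto
  have "kernel_pow K (Suc k) (\<lambda>y. c) x = (\<integral>\<^sup>+ y. c \<partial>K x)"
    unfolding kpow_Suc kernel_op_def by (rule nn_integral_cong) (use Suc s in auto)
  also have "\<dots> = c" using prob_space.emeasure_space_1[OF s(2)] by simp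
  finally show ?case .
qed


lemma ces_meas:
  assumes K: "K \<in> M \<rightarrow>\<^sub>M prob_algebra M" and f: "f \<in> borel_measurable M"
  shows "cesaro_avg K n f \<in> borel_measurable M"
proof -
  have "(\<lambda>x. \<Sum>k<n. kernel_pow K k f x) \<in> borel_measurable M"
    by (rule borel_measurable_sum) (rule kpow_meas[OF K f])
  then show ?thesis unfolding cesaro_avg_def divide_ennreal_def by measurable
qed

lemma ennreal_cancel_helper:
  fixes X :: ennreal
  assumes "ennreal p + ennreal p \<le> ennreal p + X" "p \<ge> 0"
  shows "ennreal p \<le> X"
  using assms ennreal_add_left_cancel_le by auto

theorem proposition3p10:
  fixes M :: "'a measure" and K :: "'a \<Rightarrow> 'a measure" and m :: "'a measure"
    and V b :: "'a \<Rightarrow> real" and C :: "'a set"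
  assumes K_markov: "K \<in> M \<rightarrow>\<^sub>M prob_algebra M"
    and m_finite: "finite_measure m" and m_sets: "sets m = sets M"
    and m_nonzero: "emeasure m (space M) \<noteq> 0"
    and V_meas: "V \<in> borel_measurable M" and V_nonneg: "\<And>x. x \<in> space M \<Longrightarrow> V x \<ge> 0"
    and b_meas: "b \<in> borel_measurable M" and b_nonneg: "\<And>x. x \<in> space M \<Longrightarrow> b x \<ge> 0"
    and C_meas: "C \<in> sets M"
    and drift: "\<And>x. x \<in> space M \<Longrightarrow>
        kernel_op K (\<lambda>y. ennreal (V y)) x + 1 \<le> ennreal (V x) + ennreal (b x) * indicator C x"
    and condD: "\<And>r::real. r > 0 \<Longrightarrow> \<exists>N0::nat. N0 > 0 \<and>
        (SUP n\<in>{N0..}. \<integral>\<^sup>+ x. indicator {y \<in> space M. V y \<le> r} x *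
            cesaro_avg K n (\<lambda>y. ennreal ((b y)\<^sup>2)) x \<partial>m) < \<infinity>"
  shows "\<exists>n0::nat. n0 > 0 \<and> (INF n\<in>{n0..}. \<integral>\<^sup>+ x. cesaro_avg K n (indicator C) x \<partial>m) > 0"
proof -
  note K = K_markov
  define Vf where "Vf = (\<lambda>y. ennreal (V y))"
  define g where "g = (\<lambda>y. ennreal (b y) * indicator C y)"
  define b2 where "b2 = (\<lambda>y. ennreal ((b y)\<^sup>2))"
  define iC where "iC = (indicator C :: 'a \<Rightarrow> ennreal)"
  have Vf_m: "Vf \<in> borel_measurable M" unfolding Vf_def using V_meas by measurable
  have g_m: "g \<in> borel_measurable M" unfolding g_def using b_meas C_meas by measurable
  have b2_m: "b2 \<in> borel_measurable M" unfolding b2_def using b_meas by measurable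
  have iC_m: "iC \<in> borel_measurable M" unfolding iC_def using C_meas by measurable
  have spm: "space m = space M" using m_sets sets_eq_imp_space_eq by blast
  have stepA: "kernel_pow K (Suc k) Vf x + 1 \<le> kernel_pow K k Vf x + kernel_pow K k g x"
    if x: "x \<in> space M" for k x
  proof -
    have "kernel_pow K (Suc k) Vf x + 1 = kernel_pow K k (kernel_op K Vf) x + kernel_pow K k (\<lambda>y. 1) x"
      using kpow_const[OF K x] by (simp add: kernel_pow_def funpow_Suc_right del: funpow.simps)
    also have "\<dots> = kernel_pow K k (\<lambda>y. kernel_op K Vf y + 1) x"
      using kpow_add[OF K kop_meas[OF K Vf_m] _ x, of "\<lambda>y. 1"] by simp
    also have "\<dots> \<le> kernel_pow K k (\<lambda>y. Vf y + g y) x"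
      by (rule kpow_mono[OF K _ x]) (use drift in \<open>auto simp: Vf_def g_def\<close>)
    also have "\<dots> = kernel_pow K k Vf x + kernel_pow K k g x"
      using kpow_add[OF K Vf_m g_m x] .
    finally show ?thesis .
  qed
  have stepB: "kernel_pow K n Vf x + of_nat n \<le> Vf x + (\<Sum>k<n. kernel_pow K k g x)"
    if x: "x \<in> space M" for n x
  proof (induction n)
    case 0 then show ?case by (simp add: kpow_0)
  next
    case (Suc n)
    have "kernel_pow K (Suc n) Vf x + of_nat (Suc n) = (kernel_pow K (Suc n) Vf x + 1) + of_nat n"
      by (simp add: add_ac)
    also have "\<dots> \<le> (kernel_pow K n Vf x + kernel_pow K n g x) + of_nat n"
      using stepA[OF x] by (rule add_right_mono)
    also have "\<dots> = (kernel_pow K n Vf x + of_nat n) + kernel_pow K n g x" by (simp add: add_ac)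
    also have "\<dots> \<le> (Vf x + (\<Sum>k<n. kernel_pow K k g x)) + kernel_pow K n g x"
      using Suc.IH by (rule add_right_mono)
    also have "\<dots> = Vf x + (\<Sum>k<Suc n. kernel_pow K k g x)" by (simp add: add_ac)
    finally show ?case .
  qed
  have stepC: "ennreal (2*u) * (\<Sum>k<n. kernel_pow K k g x)
      \<le> ennreal (u\<^sup>2) * (\<Sum>k<n. kernel_pow K k b2 x) + (\<Sum>k<n. kernel_pow K k iC x)"
    if x: "x \<in> space M" and u: "u > 0" for u n x
  proof -
    have pw: "ennreal (2*u) * g y \<le> ennreal (u\<^sup>2) * b2 y + iC y" if y: "y \<in> space M" for y
    proof (cases "y \<in> C")
      case True
      have "2*u*b y \<le> u\<^sup>2 * (b y)\<^sup>2 + 1"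
        using sum_squares_ge_zero[of "u * b y - 1" 0] by (simp add: power2_eq_square algebra_simps)
      then have l: "ennreal (2*u*b y) \<le> ennreal (u\<^sup>2 * (b y)\<^sup>2 + 1)" by (rule ennreal_leI)
      have e: "ennreal (u\<^sup>2 * (b y)\<^sup>2 + 1) = ennreal (u\<^sup>2 * (b y)\<^sup>2) + 1"
        by (subst ennreal_plus) auto
      show ?thesis using True u b_nonneg[OF y] l unfolding e
        by (simp add: g_def b2_def iC_def ennreal_mult[symmetric])
    next
      case False then show ?thesis by (simp add: g_def iC_def)
    qed
    have "ennreal (2*u) * kernel_pow K k g x \<le> ennreal (u\<^sup>2) * kernel_pow K k b2 x + kernel_pow K k iC x" for k
    proof -
      have "ennreal (2*u) * kernel_pow K k g x = kernel_pow K k (\<lambda>y. ennreal (2*u) * g y) x"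
        using kpow_cmult[OF K g_m x] by simp
      also have "\<dots> \<le> kernel_pow K k (\<lambda>y. ennreal (u\<^sup>2) * b2 y + iC y) x"
        by (rule kpow_mono[OF K pw x])
      also have "\<dots> = ennreal (u\<^sup>2) * kernel_pow K k b2 x + kernel_pow K k iC x"
        using kpow_add[OF K _ iC_m x, of "\<lambda>y. ennreal (u\<^sup>2) * b2 y"] kpow_cmult[OF K b2_m x] b2_m
        by simp
      finally show ?thesis .
    qed
    then have "(\<Sum>k<n. ennreal (2*u) * kernel_pow K k g x)
       \<le> (\<Sum>k<n. ennreal (u\<^sup>2) * kernel_pow K k b2 x + kernel_pow K k iC x)"
      by (rule sum_mono)
    then show ?thesis by (simp add: sum_distrib_left sum.distrib)
  qed
  have stepD: "ennreal u \<le> ennreal (u\<^sup>2) * cesaro_avg K n b2 x + cesaro_avg K n iC x"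
    if x: "x \<in> space M" and u: "u > 0" and n: "n > 0" and Vr: "2 * V x \<le> real n" for u n x
  proof -
    define S where "S = (\<Sum>k<n. kernel_pow K k g x)"
    define X where "X = ennreal (u\<^sup>2) * (\<Sum>k<n. kernel_pow K k b2 x) + (\<Sum>k<n. kernel_pow K k iC x)"
    have h1: "of_nat n \<le> Vf x + S" unfolding S_def
      by (rule order_trans[OF add_increasing[OF zero_le order_refl] stepB[OF x]])
    have h2: "ennreal (real n) \<le> Vf x + S" using h1 by (simp add: ennreal_of_nat_eq_real_of_nat)
    have h3: "ennreal (2*u) * ennreal (real n) \<le> ennreal (2*u) * (Vf x + S)"
      by (rule mult_left_mono[OF h2]) simp
    have h4: "ennreal (2*u) * (Vf x + S) = ennreal (2*u) * Vf x + ennreal (2*u) * S"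
      by (simp add: distrib_left)
    have h5: "ennreal (2*u) * S \<le> X"
      using stepC[OF x u, of n] unfolding S_def X_def .
    have h6: "ennreal (2*u) * Vf x \<le> ennreal (u * real n)"
    proof -
      have "2*u*V x \<le> u * real n" using u Vr by (simp add: mult.assoc)
      then have "ennreal (2*u*V x) \<le> ennreal (u * real n)" by (rule ennreal_leI)
      then show ?thesis unfolding Vf_def using u V_nonneg[OF x] by (simp add: ennreal_mult[symmetric])
    qed
    have h7: "ennreal (2*u) * ennreal (real n) = ennreal (u * real n) + ennreal (u * real n)"
    proof -
      have "ennreal (2*u) * ennreal (real n) = ennreal (u * real n + u * real n)"
        using u by (simp add: ennreal_mult[symmetric] algebra_simps)
      also have "\<dots> = ennreal (u * real n) + ennreal (u * real n)"
        by (rule ennreal_plus) (use u in auto)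
      finally show ?thesis .
    qed
    have "ennreal (u * real n) + ennreal (u * real n) \<le> ennreal (2*u) * Vf x + X"
      using h3 h4 h5 h7 by (metis add_left_mono order_trans)
    also have "\<dots> \<le> ennreal (u * real n) + X" using h6 by (rule add_right_mono)
    finally have "ennreal (u * real n) + ennreal (u * real n) \<le> ennreal (u * real n) + X" .
    then have "ennreal (u * real n) \<le> X" using u by (intro ennreal_cancel_helper) auto
    then have "ennreal (u * real n) / ennreal (real n) \<le> X / ennreal (real n)"
      by (rule divide_right_mono_ennreal)
    moreover have "ennreal (u * real n) / ennreal (real n) = ennreal u"
      using u n by (simp add: ennreal_mult ennreal_mult_divide_eq)
    moreover have "X / ennreal (real n) = ennreal (u\<^sup>2) * cesaro_avg K n b2 x + cesaro_avg K n iC x"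
      unfolding X_def cesaro_avg_def by (simp add: add_divide_distrib_ennreal ennreal_times_divide)
    ultimately show ?thesis by simp
  qed
  have "\<exists>r>0. emeasure m {y \<in> space M. V y \<le> r} > 0"
  proof (rule ccontr)
    assume "\<not> ?thesis"
    then have z: "emeasure m {y \<in> space M. V y \<le> real (Suc k)} = 0" for k by auto
    define A where "A = (\<lambda>k. {y \<in> space M. V y \<le> real (Suc k)})"
    have As: "range A \<subseteq> sets m" unfolding A_def m_sets using V_meas by auto
    have Ai: "incseq A" unfolding A_def incseq_def by auto
    have U: "(\<Union>k. A k) = space M"
    proof (rule set_eqI, rule iffI)
      fix y assume "y \<in> space M"
      moreover have "V y \<le> real (Suc (nat \<lceil>V y\<rceil>))" by linarith
      ultimately show "y \<in> (\<Union>k. A k)" unfolding A_def by blast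
    qed (auto simp: A_def)
    have "emeasure m (space M) = (SUP k. emeasure m (A k))"
      using SUP_emeasure_incseq[OF As Ai] U by simp
    also have "\<dots> = 0" using z by (simp add: A_def)
    finally show False using m_nonzero by simp
  qed
  then obtain r where r: "r > 0" and Apos: "emeasure m {y \<in> space M. V y \<le> r} > 0" by blast
  define A where "A = {y \<in> space M. V y \<le> r}"
  have A_sets: "A \<in> sets M" unfolding A_def using V_meas by measurable
  obtain N0 where N0: "N0 > 0" and Bfin: "(SUP n\<in>{N0..}. \<integral>\<^sup>+ x. indicator A x * cesaro_avg K n b2 x \<partial>m) < \<infinity>"
    using condD[OF r] unfolding A_def b2_def by blast
  define B where "B = (SUP n\<in>{N0..}. \<integral>\<^sup>+ x. indicator A x * cesaro_avg K n b2 x \<partial>m)"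
  define Bt where "Bt = enn2real B"
  have BBt: "B = ennreal Bt" unfolding Bt_def using Bfin B_def by (simp add: ennreal_enn2real less_top)
  have Bt0: "Bt \<ge> 0" unfolding Bt_def by simp
  define a where "a = measure m A"
  have eA: "emeasure m A = ennreal a" unfolding a_def
    by (rule finite_measure.emeasure_eq_measure[OF m_finite])
  have a0: "a > 0" using Apos eA unfolding A_def by (simp add: a_def)
  define u where "u = a / (2 * (Bt + 1))"
  have u0: "u > 0" unfolding u_def using a0 Bt0 by simp
  have uB: "u\<^sup>2 * Bt \<le> u * a / 2"
  proof -
    have "u * Bt \<le> a / 2" unfolding u_def using a0 Bt0
      by (simp add: field_simps)
    then have "u * (u * Bt) \<le> u * (a / 2)" using u0 by (intro mult_left_mono) auto
    then show ?thesis by (simp add: power2_eq_square algebra_simps)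
  qed
  define n0 where "n0 = max N0 (nat \<lceil>2 * r\<rceil>)"
  have n0: "n0 > 0" unfolding n0_def using N0 by simp
  have bound: "ennreal (u * a / 2) \<le> (\<integral>\<^sup>+ x. cesaro_avg K n iC x \<partial>m)" if n: "n \<ge> n0" for n
  proof -
    have nN0: "n \<in> {N0..}" using n unfolding n0_def by simp
    have npos: "n > 0" using n n0 by simp
    have nr: "2 * r \<le> real n" using n unfolding n0_def by linarith
    have mc: "measurable m borel = measurable M borel" by (rule measurable_cong_sets[OF m_sets refl])
    have cb2: "cesaro_avg K n b2 \<in> borel_measurable m" unfolding mc by (rule ces_meas[OF K b2_m])
    have ciC: "cesaro_avg K n iC \<in> borel_measurable m" unfolding mc by (rule ces_meas[OF K iC_m])
    have iA: "indicator A \<in> borel_measurable m" using A_sets m_sets by simp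
    have pw: "ennreal u * indicator A x \<le> ennreal (u\<^sup>2) * (indicator A x * cesaro_avg K n b2 x) + cesaro_avg K n iC x"
      if x: "x \<in> space m" for x
    proof (cases "x \<in> A")
      case True
      then have "x \<in> space M" "2 * V x \<le> real n" using nr unfolding A_def by auto
      then show ?thesis using stepD[OF _ u0 npos] True by simp
    qed simp
    have "ennreal (u * a) = (\<integral>\<^sup>+ x. ennreal u * indicator A x \<partial>m)"
    proof -
      have Am: "A \<in> sets m" using A_sets m_sets by simp
      show ?thesis unfolding nn_integral_cmult_indicator[OF Am] eA using u0 a0 by (simp add: ennreal_mult)
    qed
    also have "\<dots> \<le> (\<integral>\<^sup>+ x. ennreal (u\<^sup>2) * (indicator A x * cesaro_avg K n b2 x) + cesaro_avg K n iC x \<partial>m)"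
      by (rule nn_integral_mono) (rule pw)
    also have "\<dots> = ennreal (u\<^sup>2) * (\<integral>\<^sup>+ x. indicator A x * cesaro_avg K n b2 x \<partial>m) + (\<integral>\<^sup>+ x. cesaro_avg K n iC x \<partial>m)"
    proof -
      note [measurable] = cb2 ciC iA
      have p1: "(\<lambda>x. ennreal (u\<^sup>2) * (indicator A x * cesaro_avg K n b2 x)) \<in> borel_measurable m" by measurable
      have p2: "(\<lambda>x. indicator A x * cesaro_avg K n b2 x) \<in> borel_measurable m" by measurable
      show ?thesis by (simp only: nn_integral_add[OF p1 ciC] nn_integral_cmult[OF p2])
    qed
    also have "\<dots> \<le> ennreal (u\<^sup>2) * B + (\<integral>\<^sup>+ x. cesaro_avg K n iC x \<partial>m)"
      unfolding B_def by (intro add_right_mono mult_left_mono SUP_upper nN0) auto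
    also have "ennreal (u\<^sup>2) * B \<le> ennreal (u * a / 2)"
      unfolding BBt using uB u0 Bt0 by (simp add: ennreal_mult[symmetric] ennreal_leI)
    finally have "ennreal (u * a) \<le> ennreal (u * a / 2) + (\<integral>\<^sup>+ x. cesaro_avg K n iC x \<partial>m)"
      by (simp add: add_right_mono)
    moreover have "ennreal (u * a) = ennreal (u * a / 2) + ennreal (u * a / 2)"
      using u0 a0 by (simp add: ennreal_plus[symmetric] del: ennreal_plus)
    ultimately show ?thesis using u0 a0 by (intro ennreal_cancel_helper) auto
  qed
  have "ennreal (u * a / 2) \<le> (INF n\<in>{n0..}. \<integral>\<^sup>+ x. cesaro_avg K n (indicator C) x \<partial>m)"
    by (rule INF_greatest) (use bound in \<open>auto simp: iC_def\<close>)
  moreover have "ennreal (u * a / 2) > 0" using u0 a0 by simp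
  ultimately show ?thesis using n0 by (metis order_less_le_trans)
qed

end
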